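(* Let $\lambda>0$ and let $(\beta_n)_{n\geq0}$ be a sequence with $0<\beta_n\leq1$. Consider the system (governing the state probabilities of the state dependent time fractional Poisson process-II) $$p^{\beta_n}(n,t)=p^{\beta_n}(n,0)-\lambda\big(I_t^{\beta_n}p^{\beta_n}(n,t)-I_t^{\beta_{n-1}}p^{\beta_{n-1}}(n-1,t)\big),\qquad n\geq 0,\ t\ge0,$$ with $p^{\beta_{-1}}(-1,t)=0$ for $t\ge0$, $p^{\beta_0}(0,0)=1$ and $p^{\beta_n}(n,0)=0$ for $n\geq 1$. The solution of this system is given by $$p^{\beta_n}(n,t)=(-1)^n\sum_{k=n}^{\infty}(-\lambda)^k\sum_{\Omega^k_n}\frac{t^{\sum_{j=0}^nk_j\beta_j}}{\Gamma\big(1+\sum_{j=0}^nk_j\beta_j\big)},\qquad n\geq0,$$ where $\Omega^k_n=\{(k_0,k_1,\ldots,k_n):\ \sum_{j=0}^nk_j=k,\ k_n\in\mathbb{N}_0,\ k_j\in\mathbb{N}_0\setminus\{0\} \text{ for } 0\leq j\leq n-1\}$.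
   Context: $\mathbb{N}_0$ denotes the set of nonnegative integers. For $\beta>0$, $I_t^{\beta}$ is the Riemann-Liouville fractional integral $I_t^{\beta}f(t)=\frac{1}{\Gamma(\beta)}\int_0^t (t-s)^{\beta-1}f(s)\,\mathrm{d}s$. *)

theory Defs
  imports "HOL-Analysis.Analysis"
begin

definition RL_int :: "real \<Rightarrow> (real \<Rightarrow> real) \<Rightarrow> real \<Rightarrow> real" where
  "RL_int \<beta> f t = (1 / Gamma \<beta>) * integral {0..t} (\<lambda>s. (t - s) powr (\<beta> - 1) * f s)"

definition RL_integrable :: "real \<Rightarrow> (real \<Rightarrow> real) \<Rightarrow> real \<Rightarrow> bool" where
  "RL_integrable \<beta> f t \<longleftrightarrow> (\<lambda>s. (t - s) powr (\<beta> - 1) * f s) integrable_on {0..t}"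

text \<open>The system of the theorem; p n t stands for p^{beta_n}(n,t), and p(-1,t) = 0.\<close>
definition solves_sys :: "real \<Rightarrow> (nat \<Rightarrow> real) \<Rightarrow> (nat \<Rightarrow> real \<Rightarrow> real) \<Rightarrow> bool" where
  "solves_sys lam \<beta> p \<longleftrightarrow>
     p 0 0 = 1 \<and> (\<forall>n\<ge>1. p n 0 = 0) \<and>
     (\<forall>n t. t \<ge> 0 \<longrightarrow> RL_integrable (\<beta> n) (p n) t \<and>
        p n t = p n 0 - lam * (RL_int (\<beta> n) (p n) t
                 - (if n = 0 then 0 else RL_int (\<beta> (n - 1)) (p (n - 1)) t)))"

text \<open>Power with the convention t^0 = 1 (also for t = 0).\<close>
definition pw :: "real \<Rightarrow> real \<Rightarrow> real" where
  "pw t e = (if e = 0 then 1 else t powr e)"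

definition Omega :: "nat \<Rightarrow> nat \<Rightarrow> nat list set" where
  "Omega k n = {ks. length ks = n + 1 \<and> sum_list ks = k \<and> (\<forall>j<n. ks ! j \<ge> 1)}"

definition inner_sum :: "(nat \<Rightarrow> real) \<Rightarrow> nat \<Rightarrow> nat \<Rightarrow> real \<Rightarrow> real" where
  "inner_sum \<beta> k n t = (\<Sum>ks\<in>Omega k n.
      pw t (\<Sum>j\<le>n. real (ks ! j) * \<beta> j) / Gamma (1 + (\<Sum>j\<le>n. real (ks ! j) * \<beta> j)))"

text \<open>The k-th term (k = n + i) of the outer series.\<close>
definition sol_term :: "real \<Rightarrow> (nat \<Rightarrow> real) \<Rightarrow> nat \<Rightarrow> real \<Rightarrow> nat \<Rightarrow> real" where
  "sol_term lam \<beta> n t i = (-lam) ^ (n + i) * inner_sum \<beta> (n + i) n t"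

definition sol :: "real \<Rightarrow> (nat \<Rightarrow> real) \<Rightarrow> nat \<Rightarrow> real \<Rightarrow> real" where
  "sol lam \<beta> n t = (-1) ^ n * (\<Sum>i. sol_term lam \<beta> n t i)"

end

theory Submission
  imports Defs
begin


lemma gamma_lb:
  fixes y c :: real
  assumes "y \<ge> 0" "c \<ge> 1"
  shows "c powr y * exp (-(c+1)) \<le> Gamma (1 + y)"
proof -
  define f where "f = (\<lambda>t::real. t powr (1 + y - 1) / exp t)"
  have I: "(f has_integral Gamma (1+y)) {0..}" unfolding f_def using Gamma_integral_real[of "1+y"] assms by simp
  have sub: "{c..c+1} \<subseteq> {0..}" using assms by auto
  have i1: "f integrable_on {c..c+1}"
    by (rule integrable_on_subinterval[of _ "{0..}"]) (use I sub in auto)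
  have "integral {c..c+1} f \<le> integral {0..} f"
    using integral_subset_le[OF sub i1] I by (auto simp: f_def)
  also have "\<dots> = Gamma (1+y)" using I by (simp add: integral_unique)
  finally have A: "integral {c..c+1} f \<le> Gamma (1+y)" .
  have "integral {c..c+1} (\<lambda>t. c powr y * exp (-(c+1))) \<le> integral {c..c+1} f"
  proof (rule integral_le[OF _ i1])
    show "(\<lambda>t. c powr y * exp (-(c+1))) integrable_on {c..c+1}" by (rule integrable_const_ivl)
    fix t assume t: "t \<in> {c..c+1}"
    have "c powr y \<le> t powr y" using t assms by (intro powr_mono2) auto
    moreover have "exp (-(c+1)) \<le> 1 / exp t"
    proof -
      have "exp (-(c+1)) \<le> exp (-t)" using t by simp
      thus ?thesis by (simp add: exp_minus field_simps)
    qed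
    ultimately have "c powr y * exp (-(c+1)) \<le> t powr y * (1 / exp t)"
      by (intro mult_mono) auto
    thus "c powr y * exp (-(c+1)) \<le> f t" by (simp add: f_def)
  qed
  moreover have "integral {c..c+1} (\<lambda>t. c powr y * exp (-(c+1))) = c powr y * exp (-(c+1))"
    by simp
  ultimately show ?thesis using A by linarith
qed

lemma rl_pow:
  fixes b e t :: real
  assumes b: "b > 0" and e: "e \<ge> 0" and t: "t \<ge> 0"
  shows "((\<lambda>s. (t-s) powr (b-1) * pw s e) has_integral (Beta (1+e) b * t powr (e+b))) {0..t}"
proof (cases "t = 0")
  case True
  then show ?thesis using has_integral_refl(2)[of "\<lambda>s. (t-s) powr (b-1) * pw s e" 0] by simp
next
  case False
  with t have tp: "t > 0" by simp
  define g where "g = (\<lambda>u::real. u powr ((1+e) - 1) * (1 - u) powr (b - 1))"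
  have B: "(g has_integral Beta (1+e) b) (cbox 0 1)"
    unfolding g_def cbox_interval using has_integral_Beta_real[of "1+e" b] b e by simp
  have "((\<lambda>x. g ((1/t) * x + 0)) has_integral (Beta (1+e) b /\<^sub>R (1/t) ^ DIM(real)))
           (cbox ((0 - 0) /\<^sub>R (1/t)) ((1 - 0) /\<^sub>R (1/t)))"
    using has_integral_affinity'[OF B, of "1/t" 0] tp by simp
  hence G: "((\<lambda>x. g (x / t)) has_integral (t * Beta (1+e) b)) {0..t}"
    using tp by (simp add: cbox_interval)
  have G2: "((\<lambda>x. t powr (e+b-1) * g (x / t)) has_integral (Beta (1+e) b * t powr (e+b))) {0..t}"
  proof -
    have "((\<lambda>x. t powr (e+b-1) * g (x / t)) has_integral (t powr (e+b-1) * (t * Beta (1+e) b))) {0..t}"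
      using has_integral_mult_right[OF G] by simp
    moreover have "t powr (e+b-1) * (t * Beta (1+e) b) = Beta (1+e) b * t powr (e+b)"
      using tp by (simp add: powr_diff powr_add field_simps)
    ultimately show ?thesis by simp
  qed
  show ?thesis
  proof (rule has_integral_spike[OF _ _ G2])
    show "negligible {0::real, t}" by simp
    fix s assume s: "s \<in> {0..t} - {0, t}"
    hence s0: "0 < s" "s < t" by auto
    have "t powr (e+b-1) * g (s / t) = t powr (e+b-1) * ((s/t) powr e * (1 - s/t) powr (b-1))"
      by (simp add: g_def)
    also have "\<dots> = t powr (e+b-1) * ((s powr e / t powr e) * ((t - s) powr (b-1) / t powr (b-1)))"
    proof -
      have "1 - s/t = (t - s) / t" using tp by (simp add: field_simps)
      thus ?thesis using s0 tp by (simp add: powr_divide)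
    qed
    also have "\<dots> = (t-s) powr (b-1) * s powr e"
      using tp by (simp add: powr_diff powr_add field_simps)
    also have "\<dots> = (t-s) powr (b-1) * pw s e"
      using s0 by (simp add: pw_def)
    finally show "(t-s) powr (b-1) * pw s e = t powr (e+b-1) * g (s / t)" by simp
  qed
qed

definition gg :: "real \<Rightarrow> real \<Rightarrow> real" where
  "gg e s = pw s e / Gamma (1 + e)"

lemma rl_gg:
  fixes b e t :: real
  assumes b: "b > 0" and e: "e \<ge> 0" and t: "t \<ge> 0"
  shows "((\<lambda>s. (t-s) powr (b-1) * gg e s) has_integral (Gamma b * gg (e+b) t)) {0..t}"
proof -
  have "((\<lambda>s. (t-s) powr (b-1) * pw s e / Gamma (1+e)) has_integral (Beta (1+e) b * t powr (e+b) / Gamma (1+e))) {0..t}"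
    using has_integral_divide[OF rl_pow[OF b e t], of "Gamma (1+e)"] by simp
  moreover have "Beta (1+e) b * t powr (e+b) / Gamma (1+e) = Gamma b * gg (e+b) t"
  proof -
    have "Gamma (1+e) > 0" by (rule Gamma_real_pos) (use e in simp)
    hence g1: "Gamma (1+e) \<noteq> 0" by simp
    have "1 + (e + b) \<noteq> 0" "e + b \<noteq> 0" using e b by auto
    hence "Beta (1+e) b * t powr (e+b) / Gamma (1+e) = Gamma b * (t powr (e+b) / Gamma (1 + (e+b)))"
      using g1 by (simp add: Beta_def add_ac)
    thus ?thesis using e b by (simp add: gg_def pw_def)
  qed
  ultimately show ?thesis by (simp add: gg_def)
qed

lemma kernel_int:
  fixes b t :: real
  assumes b: "b > 0" and t: "t \<ge> 0"
  shows "(\<lambda>s. (t-s) powr (b-1)) integrable_on {0..t}"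
  using rl_pow[OF b _ t, of 0] by (auto simp: pw_def)

lemma rl_series:
  fixes b t :: real and f :: "nat \<Rightarrow> real \<Rightarrow> real"
  assumes b: "b > 0" and t: "t \<ge> 0"
    and fi: "\<And>i. ((\<lambda>s. (t-s) powr (b-1) * f i s) has_integral I i) {0..t}"
    and fM: "\<And>i s. s \<in> {0..t} \<Longrightarrow> \<bar>f i s\<bar> \<le> M i" and M: "summable M"
  shows "I sums integral {0..t} (\<lambda>s. (t-s) powr (b-1) * (\<Sum>i. f i s))"
    "((\<lambda>s. (t-s) powr (b-1) * (\<Sum>i. f i s)) has_integral (\<Sum>i. I i)) {0..t}"
proof -
  define F where "F = (\<lambda>N s. (t-s) powr (b-1) * (\<Sum>i<N. f i s))"
  define h where "h = (\<lambda>s. (t-s) powr (b-1) * suminf M)"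
  have M0: "M i \<ge> 0" for i using fM[of 0 i] t by force
  have FI: "(F N has_integral (\<Sum>i<N. I i)) {0..t}" for N
    unfolding F_def sum_distrib_left by (rule has_integral_sum) (use fi in auto)
  have hi: "h integrable_on {0..t}" unfolding h_def
    using integrable_on_mult_left[OF kernel_int[OF b t]] by simp
  have sf: "summable (\<lambda>i. f i s)" if "s \<in> {0..t}" for s
    by (rule summable_comparison_test[OF _ M]) (use fM that in auto)
  have le: "norm (F N s) \<le> h s" if s: "s \<in> {0..t}" for N s
  proof -
    have k0: "(t-s) powr (b-1) \<ge> 0" by simp
    have "\<bar>\<Sum>i<N. f i s\<bar> \<le> (\<Sum>i<N. M i)"
      by (rule order_trans[OF sum_abs sum_mono]) (use fM s in auto)
    also have "\<dots> \<le> suminf M" using M M0 by (intro sum_le_suminf) auto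
    finally have "\<bar>\<Sum>i<N. f i s\<bar> \<le> suminf M" .
    thus ?thesis unfolding F_def h_def using k0
      by (simp add: abs_mult mult_left_mono)
  qed
  have conv: "(\<lambda>N. F N s) \<longlonglongrightarrow> (t-s) powr (b-1) * (\<Sum>i. f i s)" if "s \<in> {0..t}" for s
    unfolding F_def by (intro tendsto_mult_left summable_LIMSEQ sf that)
  note DC = dominated_convergence[of F "{0..t}" h, OF _ hi le conv]
  have "(\<lambda>N. integral {0..t} (F N)) \<longlonglongrightarrow> integral {0..t} (\<lambda>s. (t-s) powr (b-1) * (\<Sum>i. f i s))"
    using DC(2) FI by blast
  moreover have "integral {0..t} (F N) = (\<Sum>i<N. I i)" for N using FI by (rule integral_unique)
  ultimately show S: "I sums integral {0..t} (\<lambda>s. (t-s) powr (b-1) * (\<Sum>i. f i s))"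
    by (simp add: sums_def)
  have "(\<lambda>s. (t-s) powr (b-1) * (\<Sum>i. f i s)) integrable_on {0..t}" using DC(1) FI by blast
  thus "((\<lambda>s. (t-s) powr (b-1) * (\<Sum>i. f i s)) has_integral (\<Sum>i. I i)) {0..t}"
    using S sums_unique by (metis has_integral_integral)
qed

lemma gamma_geom:
  fixes bm x :: real
  assumes bm: "bm > 0" and x: "x \<ge> 0"
  shows "\<exists>C. \<forall>(k::nat) e. real k * bm \<le> e \<longrightarrow> x ^ k / Gamma (1 + e) \<le> C * (1/2) ^ k"
proof -
  define c where "c = max 1 ((2*x) powr (1/bm))"
  have c1: "c \<ge> 1" by (simp add: c_def)
  have cb: "2 * x \<le> c powr bm"
  proof -
    have "(2*x) powr (1/bm) \<le> c" by (simp add: c_def)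
    hence "((2*x) powr (1/bm)) powr bm \<le> c powr bm" using bm by (intro powr_mono2) auto
    moreover have "((2*x) powr (1/bm)) powr bm = 2 * x" using bm x by (simp add: powr_powr)
    ultimately show ?thesis by simp
  qed
  have cbp: "c powr bm > 0" using c1 by simp
  show ?thesis
  proof (intro exI allI impI)
    fix k :: nat and e :: real assume ke: "real k * bm \<le> e"
    have e0: "e \<ge> 0" using ke bm by (meson mult_nonneg_nonneg of_nat_0_le_iff order_trans less_imp_le)
    have G: "c powr e * exp (-(c+1)) \<le> Gamma (1 + e)" by (rule gamma_lb[OF e0 c1])
    have "(c powr bm) ^ k = c powr (real k * bm)" using c1 by (simp add: powr_realpow[symmetric] powr_powr mult.commute)
    also have "\<dots> \<le> c powr e" using c1 ke by (intro powr_mono) auto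
    finally have ck: "(c powr bm) ^ k \<le> c powr e" .
    have pos: "(c powr bm) ^ k * exp (-(c+1)) > 0" using cbp by simp
    have G2: "(c powr bm) ^ k * exp (-(c+1)) \<le> Gamma (1 + e)"
      using G ck by (meson exp_ge_zero mult_right_mono order_trans)
    have "x ^ k / Gamma (1 + e) \<le> x ^ k / ((c powr bm) ^ k * exp (-(c+1)))"
      using G2 pos x by (intro divide_left_mono) auto
    also have "\<dots> = exp (c+1) * (x / c powr bm) ^ k"
    proof -
      have "exp (-(c+1)) = 1 / exp (c+1)" by (metis exp_minus inverse_eq_divide)
      thus ?thesis by (simp add: power_divide)
    qed
    also have "\<dots> \<le> exp (c+1) * (1/2) ^ k"
      using cb cbp x by (intro mult_left_mono power_mono) (auto simp: field_simps)
    finally show "x ^ k / Gamma (1 + e) \<le> exp (c+1) * (1/2) ^ k" .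
  qed
qed

lemma volterra_zero:
  fixes b lam M T :: real and q :: "real \<Rightarrow> real"
  assumes b: "b > 0" and T: "T \<ge> 0"
    and qM: "\<And>t. 0 \<le> t \<Longrightarrow> t \<le> T \<Longrightarrow> \<bar>q t\<bar> \<le> M"
    and qi: "\<And>t. 0 \<le> t \<Longrightarrow> t \<le> T \<Longrightarrow> RL_integrable b q t"
    and qe: "\<And>t. 0 \<le> t \<Longrightarrow> t \<le> T \<Longrightarrow> q t = - lam * RL_int b q t"
  shows "q T = 0"
proof -
  have Gb: "Gamma b > 0" using b by (rule Gamma_real_pos)
  have claim: "\<forall>t. 0 \<le> t \<and> t \<le> T \<longrightarrow> \<bar>q t\<bar> \<le> M * \<bar>lam\<bar> ^ m * gg (real m * b) t" for m
  proof (induction m)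
    case 0
    then show ?case using qM by (simp add: gg_def pw_def)
  next
    case (Suc m)
    show ?case
    proof (intro allI impI)
      fix t assume t: "0 \<le> t \<and> t \<le> T"
      define K where "K = M * \<bar>lam\<bar> ^ m"
      have I1: "(\<lambda>s. (t-s) powr (b-1) * q s) integrable_on {0..t}"
        using qi[of t] t by (simp add: RL_integrable_def)
      have R: "((\<lambda>s. K * ((t-s) powr (b-1) * gg (real m * b) s)) has_integral
                 K * (Gamma b * gg (real m * b + b) t)) {0..t}"
        by (rule has_integral_mult_right, rule rl_gg) (use b t in auto)
      have "norm (integral {0..t} (\<lambda>s. (t-s) powr (b-1) * q s))
             \<le> integral {0..t} (\<lambda>s. K * ((t-s) powr (b-1) * gg (real m * b) s))"
      proof (rule integral_norm_bound_integral[OF I1])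
        show "(\<lambda>s. K * ((t-s) powr (b-1) * gg (real m * b) s)) integrable_on {0..t}"
          using R by blast
        fix s assume s: "s \<in> {0..t}"
        have "\<bar>q s\<bar> \<le> K * gg (real m * b) s" using Suc.IH s t unfolding K_def by auto
        hence "(t-s) powr (b-1) * \<bar>q s\<bar> \<le> (t-s) powr (b-1) * (K * gg (real m * b) s)"
          by (intro mult_left_mono) auto
        thus "norm ((t-s) powr (b-1) * q s) \<le> K * ((t-s) powr (b-1) * gg (real m * b) s)"
          by (simp add: abs_mult mult_ac)
      qed
      also have "\<dots> = K * (Gamma b * gg (real m * b + b) t)" using R by (rule integral_unique)
      finally have N: "\<bar>integral {0..t} (\<lambda>s. (t-s) powr (b-1) * q s)\<bar> \<le> K * (Gamma b * gg (real m * b + b) t)"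
        by simp
      have "\<bar>q t\<bar> = \<bar>lam\<bar> * \<bar>integral {0..t} (\<lambda>s. (t-s) powr (b-1) * q s)\<bar> / Gamma b"
        using qe[of t] t Gb by (simp add: RL_int_def abs_mult)
      also have "\<dots> \<le> \<bar>lam\<bar> * (K * (Gamma b * gg (real m * b + b) t)) / Gamma b"
        using N Gb by (intro divide_right_mono mult_left_mono) auto
      also have "\<dots> = M * \<bar>lam\<bar> ^ Suc m * gg (real (Suc m) * b) t"
        using Gb by (simp add: K_def algebra_simps)
      finally show "\<bar>q t\<bar> \<le> M * \<bar>lam\<bar> ^ Suc m * gg (real (Suc m) * b) t" .
    qed
  qed
  show ?thesis
  proof (cases "T = 0")
    case True
    have "\<bar>q T\<bar> \<le> M * \<bar>lam\<bar> ^ 1 * gg (real 1 * b) T" using claim[of 1] T by blast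
    thus ?thesis using True b by (simp add: gg_def pw_def)
  next
    case False
    hence Tp: "T > 0" using T by simp
    define x where "x = \<bar>lam\<bar> * T powr b"
    have x0: "x \<ge> 0" by (simp add: x_def)
    obtain C where C: "\<And>k e. real k * b \<le> e \<Longrightarrow> x ^ k / Gamma (1 + e) \<le> C * (1/2) ^ k"
      using gamma_geom[OF b x0] by blast
    have M0: "M \<ge> 0" using qM[of T] T by linarith
    have bnd: "\<bar>q T\<bar> \<le> M * (C * (1/2) ^ m)" for m
    proof -
      have "\<bar>q T\<bar> \<le> M * \<bar>lam\<bar> ^ m * gg (real m * b) T" using claim[of m] T by blast
      also have "\<bar>lam\<bar> ^ m * gg (real m * b) T = x ^ m / Gamma (1 + real m * b)"
      proof (cases "m = 0")
        case True thus ?thesis by (simp add: gg_def pw_def)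
      next
        case False
        hence "real m * b \<noteq> 0" using b by simp
        thus ?thesis using Tp by (simp add: gg_def pw_def x_def power_mult_distrib powr_realpow[symmetric] powr_powr mult.commute)
      qed
      hence "M * \<bar>lam\<bar> ^ m * gg (real m * b) T = M * (x ^ m / Gamma (1 + real m * b))" by (simp only: mult.assoc)
      also have "\<dots> \<le> M * (C * (1/2) ^ m)" using C[of m "real m * b"] M0 by (intro mult_left_mono) auto
      finally show ?thesis .
    qed
    have "(\<lambda>m. M * (C * (1/2::real) ^ m)) \<longlonglongrightarrow> M * (C * 0)"
      by (intro tendsto_intros) simp
    hence "\<bar>q T\<bar> \<le> 0" using bnd by (intro tendsto_lowerbound[where F=sequentially]) (auto intro: always_eventually)
    thus ?thesis by simp
  qed
qed



definition expo :: "(nat \<Rightarrow> real) \<Rightarrow> nat \<Rightarrow> nat list \<Rightarrow> real" where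
  "expo \<beta> n ks = (\<Sum>j\<le>n. real (ks ! j) * \<beta> j)"

lemma inner_sum_gg: "inner_sum \<beta> k n t = (\<Sum>ks\<in>Omega k n. gg (expo \<beta> n ks) t)"
  by (simp add: inner_sum_def gg_def expo_def)

lemma sum_list_atMost: "length ks = Suc n \<Longrightarrow> sum_list ks = (\<Sum>j\<le>n. ks ! j)"
  by (simp add: sum_list_sum_nth atLeast0LessThan lessThan_Suc_atMost)

lemma Omega_sub: "Omega k n \<subseteq> {xs. set xs \<subseteq> {0..k} \<and> length xs = Suc n}"
  unfolding Omega_def using member_le_sum_list by fastforce

lemma Omega_finite: "finite (Omega k n)"
  by (rule finite_subset[OF Omega_sub]) (simp add: finite_lists_length_eq)

lemma Omega_card: "card (Omega k n) \<le> (k+1) ^ (n+1)"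
proof -
  have "card (Omega k n) \<le> card {xs. set xs \<subseteq> {0..k} \<and> length xs = Suc n}"
    by (rule card_mono[OF _ Omega_sub]) (simp add: finite_lists_length_eq)
  also have "\<dots> = (k+1) ^ (n+1)" by (simp add: card_lists_length_eq)
  finally show ?thesis .
qed

lemma expo_bounds:
  assumes ks: "ks \<in> Omega k n" and bm: "\<And>j. j \<le> n \<Longrightarrow> bm \<le> \<beta> j" and b1: "\<And>j. \<beta> j \<le> 1"
  shows "real k * bm \<le> expo \<beta> n ks" "expo \<beta> n ks \<le> real k"
proof -
  have len: "length ks = Suc n" and sk: "sum_list ks = k" using ks by (auto simp: Omega_def)
  have k: "real k = (\<Sum>j\<le>n. real (ks ! j))" using sum_list_atMost[OF len] sk by simp
  have "real k * bm = (\<Sum>j\<le>n. real (ks ! j) * bm)" by (simp add: k sum_distrib_right)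
  also have "\<dots> \<le> expo \<beta> n ks" unfolding expo_def by (intro sum_mono mult_left_mono bm) auto
  finally show "real k * bm \<le> expo \<beta> n ks" .
  have "expo \<beta> n ks \<le> (\<Sum>j\<le>n. real (ks ! j) * 1)" unfolding expo_def by (intro sum_mono mult_left_mono b1) auto
  thus "expo \<beta> n ks \<le> real k" by (simp add: k)
qed

lemma expo_nonneg: "(\<And>j. 0 \<le> \<beta> j) \<Longrightarrow> 0 \<le> expo \<beta> n ks"
  unfolding expo_def by (intro sum_nonneg) auto

lemma expo_pos:
  assumes ks: "ks \<in> Omega k n" and n: "n \<ge> 1" and b: "\<And>j. 0 < \<beta> j"
  shows "0 < expo \<beta> n ks"
proof -
  have "ks ! 0 \<ge> 1" using ks n by (auto simp: Omega_def)
  hence p: "0 < real (ks ! 0) * \<beta> 0" using b[of 0] by simp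
  have nn: "\<And>j. 0 \<le> real (ks!j) * \<beta> j" using b by (simp add: less_imp_le)
  have "real (ks ! 0) * \<beta> 0 \<le> expo \<beta> n ks" unfolding expo_def
    by (rule member_le_sum[of 0 "{..n}" "\<lambda>j. real (ks ! j) * \<beta> j"]) (use nn in auto)
  with p show ?thesis by linarith
qed

lemma expo_upd:
  assumes "length ks = Suc n"
  shows "expo \<beta> n (ks[n := v]) = expo \<beta> n ks + (real v - real (ks ! n)) * \<beta> n"
proof -
  have "expo \<beta> n (ks[n := v]) = (\<Sum>j<n. real (ks[n := v] ! j) * \<beta> j) + real v * \<beta> n"
    unfolding expo_def using assms by (simp add: lessThan_Suc_atMost[symmetric])
  also have "(\<Sum>j<n. real (ks[n := v] ! j) * \<beta> j) = (\<Sum>j<n. real (ks ! j) * \<beta> j)"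
    by (intro sum.cong) auto
  also have "expo \<beta> n ks = (\<Sum>j<n. real (ks ! j) * \<beta> j) + real (ks ! n) * \<beta> n"
    unfolding expo_def by (simp add: lessThan_Suc_atMost[symmetric])
  ultimately show ?thesis by (simp add: algebra_simps)
qed

definition AS :: "nat \<Rightarrow> nat \<Rightarrow> nat list set" where "AS k n = {ks \<in> Omega k n. 1 \<le> ks ! n}"
definition BS :: "nat \<Rightarrow> nat \<Rightarrow> nat list set" where "BS k n = {ks \<in> Omega k n. ks ! n = 0}"

lemma A_reindex:
  "(\<Sum>ks\<in>Omega k n. gg (expo \<beta> n ks + \<beta> n) t) = (\<Sum>ks\<in>AS (Suc k) n. gg (expo \<beta> n ks) t)"
proof (rule sum.reindex_bij_witness[where i = "\<lambda>ks. ks[n := ks ! n - 1]" and j = "\<lambda>ks. ks[n := ks ! n + 1]"])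
  fix a assume a: "a \<in> Omega k n"
  hence len: "length a = Suc n" and sa: "sum_list a = k" and ge: "\<forall>j<n. 1 \<le> a ! j" by (auto simp: Omega_def)
  show "(a[n := a ! n + 1])[n := (a[n := a ! n + 1]) ! n - 1] = a" using len by simp
  show "a[n := a ! n + 1] \<in> AS (Suc k) n"
    using len sa ge by (auto simp: AS_def Omega_def sum_list_update nth_list_update)
  show "gg (expo \<beta> n (a[n := a ! n + 1])) t = gg (expo \<beta> n a + \<beta> n) t"
    using len by (simp add: expo_upd algebra_simps)
next
  fix b assume b: "b \<in> AS (Suc k) n"
  hence len: "length b = Suc n" and sb: "sum_list b = Suc k" and ge: "\<forall>j<n. 1 \<le> b ! j" and bn: "1 \<le> b ! n"
    by (auto simp: AS_def Omega_def)
  show "(b[n := b ! n - 1])[n := (b[n := b ! n - 1]) ! n + 1] = b" using len bn by simp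
  show "b[n := b ! n - 1] \<in> Omega k n"
    using len sb ge bn by (auto simp: Omega_def sum_list_update nth_list_update)
qed

lemma expo_snoc0:
  assumes "length xs = Suc m"
  shows "expo \<beta> (Suc m) (xs @ [0]) = expo \<beta> m xs"
  unfolding expo_def using assms by (simp add: nth_append)

lemma B_reindex:
  "(\<Sum>ks\<in>Omega k m. gg (expo \<beta> m ks + \<beta> m) t) = (\<Sum>ks\<in>BS (Suc k) (Suc m). gg (expo \<beta> (Suc m) ks) t)"
proof (rule sum.reindex_bij_witness[where i = "\<lambda>ks. (butlast ks)[m := ks ! m - 1]" and j = "\<lambda>ks. ks[m := ks ! m + 1] @ [0]"])
  fix a assume a: "a \<in> Omega k m"
  hence len: "length a = Suc m" and sa: "sum_list a = k" and ge: "\<forall>j<m. 1 \<le> a ! j" by (auto simp: Omega_def)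
  show "(butlast (a[m := a ! m + 1] @ [0]))[m := (a[m := a ! m + 1] @ [0]) ! m - 1] = a"
    using len by (simp add: nth_append)
  have "\<forall>j<Suc m. 1 \<le> (a[m := a ! m + 1] @ [0]) ! j"
  proof (intro allI impI)
    fix j assume "j < Suc m"
    thus "1 \<le> (a[m := a ! m + 1] @ [0]) ! j" using len ge
      by (cases "j = m") (auto simp: nth_append nth_list_update)
  qed
  thus "a[m := a ! m + 1] @ [0] \<in> BS (Suc k) (Suc m)"
    using len sa by (auto simp: BS_def Omega_def sum_list_update nth_append)
  show "gg (expo \<beta> (Suc m) (a[m := a ! m + 1] @ [0])) t = gg (expo \<beta> m a + \<beta> m) t"
    using len by (simp add: expo_snoc0 expo_upd algebra_simps)
next
  fix b assume b: "b \<in> BS (Suc k) (Suc m)"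
  hence len: "length b = Suc (Suc m)" and sb: "sum_list b = Suc k" and ge: "\<forall>j<Suc m. 1 \<le> b ! j"
    and b0: "b ! Suc m = 0"
    by (auto simp: BS_def Omega_def)
  have bm: "1 \<le> b ! m" using ge by simp
  have bb: "b = butlast b @ [0]"
  proof -
    have ne: "b \<noteq> []" using len by auto
    hence "b = butlast b @ [last b]" by simp
    moreover have "last b = 0" using len b0 ne by (simp add: last_conv_nth)
    ultimately show ?thesis by simp
  qed
  have lb: "length (butlast b) = Suc m" using len by simp
  have nb: "butlast b ! m = b ! m" using len by (simp add: nth_butlast)
  have sbl: "sum_list (butlast b) = Suc k"
    using sb bb by (metis add.right_neutral sum_list_append sum_list.Cons sum_list.Nil)
  show "((butlast b)[m := b ! m - 1])[m := ((butlast b)[m := b ! m - 1]) ! m + 1] @ [0] = b"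
  proof -
    have "((butlast b)[m := b ! m - 1])[m := ((butlast b)[m := b ! m - 1]) ! m + 1] = (butlast b)[m := butlast b ! m]"
      using lb bm nb by simp
    also have "\<dots> = butlast b" by simp
    finally show ?thesis using bb by simp
  qed
  have "\<forall>j<m. 1 \<le> (butlast b)[m := b ! m - 1] ! j"
    using ge len by (auto simp: nth_list_update nth_butlast)
  thus "(butlast b)[m := b ! m - 1] \<in> Omega k m"
    using lb sbl bm nb by (auto simp: Omega_def sum_list_update)
qed

lemma Omega_split: "(\<Sum>ks\<in>Omega k n. f ks) = (\<Sum>ks\<in>AS k n. f ks) + (\<Sum>ks\<in>BS k n. f ks)"
proof -
  have "Omega k n = AS k n \<union> BS k n" by (auto simp: AS_def BS_def)
  moreover have "AS k n \<inter> BS k n = {}" by (auto simp: AS_def BS_def)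
  moreover have "finite (AS k n)" "finite (BS k n)"
    using Omega_finite by (auto simp: AS_def BS_def)
  ultimately show ?thesis by (simp add: sum.union_disjoint)
qed

lemma AS_empty: "AS n n = {}"
proof (rule ccontr)
  assume "AS n n \<noteq> {}"
  then obtain ks where ks: "ks \<in> AS n n" by blast
  hence len: "length ks = Suc n" and s: "sum_list ks = n" and ge: "\<forall>j<n. 1 \<le> ks ! j" and kn: "1 \<le> ks ! n"
    by (auto simp: AS_def Omega_def)
  have "n = (\<Sum>j\<le>n. ks ! j)" using sum_list_atMost[OF len] s by simp
  also have "\<dots> = (\<Sum>j<n. ks ! j) + ks ! n" by (simp add: lessThan_Suc_atMost[symmetric])
  also have "(\<Sum>j<n. ks ! j) \<ge> (\<Sum>j<n. 1)" using ge by (intro sum_mono) auto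
  ultimately show False using kn by simp
qed

lemma Omega_0: "Omega k 0 = {[k]}"
proof -
  have "ks = [k]" if "length ks = Suc 0" "sum_list ks = k" for ks
    using that by (cases ks) auto
  thus ?thesis by (auto simp: Omega_def)
qed

lemma BS_0: "BS k 0 = (if k = 0 then {[0]} else {})"
  by (auto simp: BS_def Omega_0)



lemma gg_nonneg: "t \<ge> 0 \<Longrightarrow> e \<ge> 0 \<Longrightarrow> gg e t \<ge> 0"
  by (simp add: gg_def pw_def Gamma_real_pos less_imp_le)

lemma inner_sum_nonneg: "(\<And>j. 0 \<le> \<beta> j) \<Longrightarrow> t \<ge> 0 \<Longrightarrow> inner_sum \<beta> k n t \<ge> 0"
  unfolding inner_sum_gg by (intro sum_nonneg gg_nonneg expo_nonneg) auto

lemma sol_bound: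
  fixes lam T :: real
  assumes lam: "lam > 0" and b: "\<And>j. 0 < \<beta> j \<and> \<beta> j \<le> 1" and T: "T \<ge> 0"
  shows "\<exists>M. summable M \<and> (\<forall>i s. 0 \<le> s \<longrightarrow> s \<le> T \<longrightarrow> \<bar>sol_term lam \<beta> n s i\<bar> \<le> M i)"
proof -
  define bm where "bm = Min (\<beta> ` {..n})"
  have bm0: "bm > 0" unfolding bm_def using b by (subst Min_gr_iff) auto
  have bmj: "bm \<le> \<beta> j" if "j \<le> n" for j unfolding bm_def using that by (intro Min_le) auto
  define p where "p = n + 1"
  define Y where "Y = max 1 T"
  define X where "X = 2 ^ (p+1) * lam * Y"
  have Y1: "Y \<ge> 1" by (simp add: Y_def)
  have X0: "X \<ge> 0" using lam Y1 by (simp add: X_def)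
  obtain C where C: "\<And>k e. real k * bm \<le> e \<Longrightarrow> X ^ k / Gamma (1 + e) \<le> C * (1/2) ^ k"
    using gamma_geom[OF bm0 X0] by blast
  have C1: "C \<ge> 1" using C[of 0 0] by simp
  have key: "\<bar>(-lam) ^ k * inner_sum \<beta> k n s\<bar> \<le> C * (1/2) ^ k" if s: "0 \<le> s" "s \<le> T" for k s
  proof -
    define D where "D = C * (1/2) ^ k / 2 ^ ((p+1)*k)"
    have each: "lam ^ k * gg (expo \<beta> n ks) s \<le> D" if ks: "ks \<in> Omega k n" for ks
    proof -
      let ?e = "expo \<beta> n ks"
      have eb: "real k * bm \<le> ?e" "?e \<le> real k" using expo_bounds[OF ks bmj] b by auto
      have e0: "?e \<ge> 0" using eb(1) bm0 by (meson mult_nonneg_nonneg of_nat_0_le_iff order_trans less_imp_le)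
      have Gp: "Gamma (1 + ?e) > 0" using e0 by (intro Gamma_real_pos) simp
      have pwb: "pw s ?e \<le> Y ^ k"
      proof (cases "?e = 0")
        case True thus ?thesis using Y1 by (simp add: pw_def)
      next
        case False
        have "s powr ?e \<le> Y powr ?e" using s e0 by (intro powr_mono2) (auto simp: Y_def)
        also have "\<dots> \<le> Y powr real k" using Y1 eb by (intro powr_mono) auto
        also have "\<dots> = Y ^ k" using Y1 by (simp add: powr_realpow)
        finally show ?thesis using False by (simp add: pw_def)
      qed
      have "lam ^ k * gg ?e s = lam ^ k * pw s ?e / Gamma (1 + ?e)" by (simp add: gg_def)
      also have "\<dots> \<le> lam ^ k * Y ^ k / Gamma (1 + ?e)"
        using pwb Gp lam by (intro divide_right_mono mult_left_mono) auto
      also have "lam ^ k * Y ^ k = X ^ k / 2 ^ ((p+1)*k)"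
      proof -
        have "(2::real) ^ ((p+1)*k) = (2 ^ (p+1)) ^ k" by (rule power_mult)
        thus ?thesis by (simp add: X_def power_mult_distrib)
      qed
      also have "X ^ k / 2 ^ ((p+1)*k) / Gamma (1 + ?e) = (X ^ k / Gamma (1 + ?e)) / 2 ^ ((p+1)*k)"
        by simp
      also have "\<dots> \<le> D" unfolding D_def using C[OF eb(1)] by (intro divide_right_mono) auto
      finally show ?thesis .
    qed
    have "\<bar>(-lam) ^ k * inner_sum \<beta> k n s\<bar> = lam ^ k * inner_sum \<beta> k n s"
      using inner_sum_nonneg[of \<beta> s k n] b s lam by (simp add: abs_mult power_abs less_imp_le)
    also have "\<dots> = (\<Sum>ks\<in>Omega k n. lam ^ k * gg (expo \<beta> n ks) s)"
      by (simp add: inner_sum_gg sum_distrib_left)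
    also have "\<dots> \<le> (\<Sum>ks\<in>Omega k n. D)" by (intro sum_mono each)
    also have "\<dots> = real (card (Omega k n)) * D" by simp
    also have "\<dots> \<le> real ((k+1)^p) * D"
    proof -
      have "real (card (Omega k n)) \<le> real ((k+1)^p)" unfolding p_def of_nat_le_iff by (rule Omega_card)
      thus ?thesis using C1 by (intro mult_right_mono) (auto simp: D_def)
    qed
    also have "\<dots> \<le> (2 ^ k) ^ p * D"
    proof -
      have "k + 1 \<le> (2::nat) ^ k" by (induction k) auto
      hence "real (k+1) \<le> 2 ^ k" by (metis of_nat_le_iff of_nat_numeral of_nat_power)
      hence "real ((k+1)^p) \<le> (2 ^ k) ^ p" by (simp add: power_mono)
      thus ?thesis using C1 by (intro mult_right_mono) (auto simp: D_def)
    qed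
    also have "\<dots> = C * (1/2) ^ k * (2 ^ (k * p) / 2 ^ ((p+1)*k))"
      by (simp add: D_def power_mult[symmetric] mult.commute)
    also have "2 ^ (k * p) / 2 ^ ((p+1)*k) = (1/2::real) ^ k"
      by (simp add: power_add algebra_simps power_one_over power_mult_distrib[symmetric])
    also have "C * (1/2) ^ k * (1/2::real) ^ k \<le> C * (1/2) ^ k * 1"
      using C1 by (intro mult_left_mono) (auto simp: power_le_one)
    finally show ?thesis by simp
  qed
  show ?thesis
  proof (intro exI conjI allI impI)
    show "summable (\<lambda>i. C * (1/2::real) ^ (n + i))"
      by (intro summable_mult) (simp add: power_add summable_mult)
    fix i s assume "0 \<le> s" "s \<le> T"
    thus "\<bar>sol_term lam \<beta> n s i\<bar> \<le> C * (1/2) ^ (n + i)" unfolding sol_term_def by (rule key)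
  qed
qed

definition VV :: "(nat \<Rightarrow> real) \<Rightarrow> nat \<Rightarrow> nat \<Rightarrow> real \<Rightarrow> real" where
  "VV \<beta> n k t = (\<Sum>ks\<in>Omega k n. gg (expo \<beta> n ks + \<beta> n) t)"

lemma int_V:
  assumes b: "\<And>j. 0 < \<beta> j" and t: "t \<ge> 0"
  shows "((\<lambda>s. (t-s) powr (\<beta> n - 1) * inner_sum \<beta> k n s) has_integral (Gamma (\<beta> n) * VV \<beta> n k t)) {0..t}"
proof -
  have "((\<lambda>s. \<Sum>ks\<in>Omega k n. (t-s) powr (\<beta> n - 1) * gg (expo \<beta> n ks) s) has_integral
          (\<Sum>ks\<in>Omega k n. Gamma (\<beta> n) * gg (expo \<beta> n ks + \<beta> n) t)) {0..t}"
    by (rule has_integral_sum[OF Omega_finite], rule rl_gg) (use b t in \<open>auto intro: expo_nonneg less_imp_le\<close>)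
  thus ?thesis by (simp add: inner_sum_gg VV_def sum_distrib_left)
qed



lemma rl_sol:
  fixes lam t :: real
  assumes lam: "lam > 0" and b: "\<And>j. 0 < \<beta> j \<and> \<beta> j \<le> 1" and t: "t \<ge> 0"
  shows "RL_integrable (\<beta> n) (sol lam \<beta> n) t"
    "(\<lambda>i. (-1)^n * (-lam)^(n+i) * VV \<beta> n (n+i) t) sums RL_int (\<beta> n) (sol lam \<beta> n) t"
proof -
  obtain M where M: "summable M" and Mb: "\<And>i s. 0 \<le> s \<Longrightarrow> s \<le> t \<Longrightarrow> \<bar>sol_term lam \<beta> n s i\<bar> \<le> M i"
    using sol_bound[where \<beta>=\<beta> and n = n, OF lam b t] by auto
  have bp: "\<beta> n > 0" using b by simp
  have Gp: "Gamma (\<beta> n) > 0" using bp by (rule Gamma_real_pos)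
  define f where "f = (\<lambda>i s. (-1)^n * sol_term lam \<beta> n s i)"
  define I where "I = (\<lambda>i. Gamma (\<beta> n) * ((-1)^n * (-lam)^(n+i) * VV \<beta> n (n+i) t))"
  have fi: "((\<lambda>s. (t-s) powr (\<beta> n - 1) * f i s) has_integral I i) {0..t}" for i
  proof -
    have "((\<lambda>s. ((-1)^n * (-lam)^(n+i)) * ((t-s) powr (\<beta> n - 1) * inner_sum \<beta> (n+i) n s)) has_integral
            ((-1)^n * (-lam)^(n+i)) * (Gamma (\<beta> n) * VV \<beta> n (n+i) t)) {0..t}"
      by (rule has_integral_mult_right, rule int_V) (use b t in auto)
    thus ?thesis by (simp add: f_def I_def sol_term_def mult_ac)
  qed
  have fM: "\<bar>f i s\<bar> \<le> M i" if "s \<in> {0..t}" for i s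
    using Mb[of s i] that by (simp add: f_def abs_mult)
  note R = rl_series[OF bp t fi fM M]
  have eq: "(t-s) powr (\<beta> n - 1) * (\<Sum>i. f i s) = (t-s) powr (\<beta> n - 1) * sol lam \<beta> n s"
    if "s \<in> {0..t}" for s
  proof -
    have s0: "0 \<le> s" using that by simp
    obtain M' where M'1: "summable M'" and M'2: "\<And>i s'. 0 \<le> s' \<Longrightarrow> s' \<le> s \<Longrightarrow> \<bar>sol_term lam \<beta> n s' i\<bar> \<le> M' i"
      using sol_bound[where \<beta>=\<beta> and n = n, OF lam b s0] by auto
    have M': "summable M'" "\<And>i. \<bar>sol_term lam \<beta> n s i\<bar> \<le> M' i" using M'1 M'2[OF s0] by auto
    have "summable (sol_term lam \<beta> n s)"
      by (rule summable_comparison_test[OF _ M'(1)]) (use M'(2) in auto)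
    hence "(\<Sum>i. f i s) = sol lam \<beta> n s" unfolding f_def sol_def by (rule suminf_mult)
    thus ?thesis by simp
  qed
  have HI: "((\<lambda>s. (t-s) powr (\<beta> n - 1) * sol lam \<beta> n s) has_integral (\<Sum>i. I i)) {0..t}"
    using R(2) has_integral_cong[of "{0..t}", OF eq] by simp
  thus "RL_integrable (\<beta> n) (sol lam \<beta> n) t" unfolding RL_integrable_def by blast
  have "I sums integral {0..t} (\<lambda>s. (t-s) powr (\<beta> n - 1) * sol lam \<beta> n s)"
    using R(1) integral_cong[of "{0..t}", OF eq] by simp
  hence "(\<lambda>i. I i / Gamma (\<beta> n)) sums (integral {0..t} (\<lambda>s. (t-s) powr (\<beta> n - 1) * sol lam \<beta> n s) / Gamma (\<beta> n))"
    by (rule sums_divide)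
  thus "(\<lambda>i. (-1)^n * (-lam)^(n+i) * VV \<beta> n (n+i) t) sums RL_int (\<beta> n) (sol lam \<beta> n) t"
    using Gp by (simp add: I_def RL_int_def)
qed


definition AAv where "AAv \<beta> n k t = (\<Sum>ks\<in>AS k n. gg (expo \<beta> n ks) t)"
definition BBv where "BBv \<beta> n k t = (\<Sum>ks\<in>BS k n. gg (expo \<beta> n ks) t)"

lemma inner_split: "inner_sum \<beta> k n t = AAv \<beta> n k t + BBv \<beta> n k t"
  unfolding inner_sum_gg AAv_def BBv_def by (rule Omega_split)

lemma VV_A: "VV \<beta> n k t = AAv \<beta> n (Suc k) t"
  unfolding VV_def AAv_def by (rule A_reindex)

lemma VV_B: "VV \<beta> m k t = BBv \<beta> (Suc m) (Suc k) t"
  unfolding VV_def BBv_def by (rule B_reindex)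

lemma AAv_diag: "AAv \<beta> n n t = 0"
  by (simp add: AAv_def AS_empty)

lemma BBv_0: "BBv \<beta> 0 k t = (if k = 0 then 1 else 0)"
  by (simp add: BBv_def BS_0 expo_def gg_def pw_def)

lemma inner_0_0: "inner_sum \<beta> i 0 0 = (if i = 0 then 1 else 0)" if "\<beta> 0 > 0"
  using that by (simp add: inner_sum_gg Omega_0 expo_def gg_def pw_def)

lemma inner_n_0:
  assumes "n \<ge> 1" "\<And>j. 0 < \<beta> j"
  shows "inner_sum \<beta> k n 0 = 0"
proof -
  have "gg (expo \<beta> n ks) 0 = 0" if "ks \<in> Omega k n" for ks
    using expo_pos[where \<beta>=\<beta>, OF that assms] by (simp add: gg_def pw_def)
  thus ?thesis by (simp add: inner_sum_gg)
qed

lemma sol_0_0: "\<beta> 0 > 0 \<Longrightarrow> sol lam \<beta> 0 0 = 1"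
proof -
  assume b: "\<beta> 0 > 0"
  have "sol_term lam \<beta> 0 0 = (\<lambda>i. if i = 0 then 1 else 0)"
    using b by (auto simp: sol_term_def inner_0_0)
  moreover have "(\<lambda>i::nat. if i = 0 then 1 else (0::real)) sums 1"
    using sums_single[of 0 "\<lambda>_. 1::real"] by simp
  ultimately show ?thesis by (simp add: sol_def sums_iff)
qed

lemma sol_n_0: "n \<ge> 1 \<Longrightarrow> (\<And>j. 0 < \<beta> j) \<Longrightarrow> sol lam \<beta> n 0 = 0"
  by (simp add: sol_def sol_term_def inner_n_0)

lemma sol_eq:
  fixes lam t :: real
  assumes lam: "lam > 0" and b: "\<And>j. 0 < \<beta> j \<and> \<beta> j \<le> 1" and t: "t \<ge> 0"
  shows "sol lam \<beta> n t = sol lam \<beta> n 0 - lam * (RL_int (\<beta> n) (sol lam \<beta> n) t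
                 - (if n = 0 then 0 else RL_int (\<beta> (n - 1)) (sol lam \<beta> (n - 1)) t))"
proof -
  have bp: "\<And>j. 0 < \<beta> j" using b by simp
  obtain M where M1: "summable M" and M2: "\<And>i s. 0 \<le> s \<Longrightarrow> s \<le> t \<Longrightarrow> \<bar>sol_term lam \<beta> n s i\<bar> \<le> M i"
    using sol_bound[where \<beta>=\<beta> and n = n, OF lam b t] by auto
  have "summable (sol_term lam \<beta> n t)"
    by (rule summable_comparison_test[OF _ M1]) (use M2[OF t] in auto)
  hence ST: "sol_term lam \<beta> n t sums (\<Sum>i. sol_term lam \<beta> n t i)" by (rule summable_sums)
  define RLn where "RLn = RL_int (\<beta> n) (sol lam \<beta> n) t"
  define a where "a = (\<lambda>i. (-lam)^(n+i) * AAv \<beta> n (n+i) t)"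
  define c where "c = (\<lambda>i. (-lam)^(n+i) * BBv \<beta> n (n+i) t)"
  have stac: "sol_term lam \<beta> n t i = a i + c i" for i
    by (simp add: sol_term_def a_def c_def inner_split algebra_simps)
  have R1: "(\<lambda>i. (-1)^n * (-lam)^(n+i) * VV \<beta> n (n+i) t) sums RLn"
    unfolding RLn_def by (rule rl_sol(2)[where \<beta>=\<beta>, OF lam b t])
  have "(\<lambda>i. ((-lam) * (-1)^n) * ((-1)^n * (-lam)^(n+i) * VV \<beta> n (n+i) t)) sums ((-lam) * (-1)^n * RLn)"
    by (rule sums_mult[OF R1])
  moreover have "((-lam) * (-1)^n) * ((-1)^n * (-lam)^(n+i) * VV \<beta> n (n+i) t) = a (Suc i)" for i
  proof -
    have "((-1::real)^n * (-1)^n) = 1" by (simp add: power_mult_distrib[symmetric])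
    hence "((-lam) * (-1)^n) * ((-1)^n * (-lam)^(n+i) * VV \<beta> n (n+i) t)
           = (-lam) * (-lam)^(n+i) * VV \<beta> n (n+i) t" by (metis (no_types, lifting) mult.assoc mult.commute mult.left_neutral)
    thus ?thesis by (simp add: a_def VV_A)
  qed
  ultimately have "(\<lambda>i. a (Suc i)) sums ((-lam) * (-1)^n * RLn)" by simp
  hence AS: "a sums ((-lam) * (-1)^n * RLn)"
    using sums_Suc_iff[of a] by (simp add: a_def AAv_diag)
  have CS: "c sums ((\<Sum>i. sol_term lam \<beta> n t i) - (-lam) * (-1)^n * RLn)"
  proof -
    have "(\<lambda>i. sol_term lam \<beta> n t i - a i) sums ((\<Sum>i. sol_term lam \<beta> n t i) - (-lam) * (-1)^n * RLn)"
      by (rule sums_diff[OF ST AS])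
    thus ?thesis by (simp add: stac)
  qed
  show ?thesis
  proof (cases n)
    case 0
    have "c = (\<lambda>i. if i = 0 then 1 else 0)" by (auto simp: c_def 0 BBv_0)
    moreover have "(\<lambda>i::nat. if i = 0 then 1 else (0::real)) sums 1"
      using sums_single[of 0 "\<lambda>_. 1::real"] by simp
    ultimately have "c sums 1" by simp
    with CS have "(\<Sum>i. sol_term lam \<beta> n t i) - (-lam) * (-1)^n * RLn = 1" using sums_unique2 by blast
    thus ?thesis using sol_0_0[of \<beta> lam] bp by (simp add: sol_def 0 RLn_def)
  next
    case (Suc m)
    define RLm where "RLm = RL_int (\<beta> m) (sol lam \<beta> m) t"
    have R2: "(\<lambda>i. (-1)^m * (-lam)^(m+i) * VV \<beta> m (m+i) t) sums RLm"
      unfolding RLm_def by (rule rl_sol(2)[where \<beta>=\<beta>, OF lam b t])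
    have "(\<lambda>i. ((-lam) * (-1)^m) * ((-1)^m * (-lam)^(m+i) * VV \<beta> m (m+i) t)) sums ((-lam) * (-1)^m * RLm)"
      by (rule sums_mult[OF R2])
    moreover have "((-lam) * (-1)^m) * ((-1)^m * (-lam)^(m+i) * VV \<beta> m (m+i) t) = c i" for i
    proof -
      have "((-1::real)^m * (-1)^m) = 1" by (simp add: power_mult_distrib[symmetric])
      hence "((-lam) * (-1)^m) * ((-1)^m * (-lam)^(m+i) * VV \<beta> m (m+i) t)
             = (-lam) * (-lam)^(m+i) * VV \<beta> m (m+i) t" by (metis (no_types, lifting) mult.assoc mult.commute mult.left_neutral)
      thus ?thesis by (simp add: c_def VV_B Suc)
    qed
    ultimately have "c sums ((-lam) * (-1)^m * RLm)" by simp
    with CS have E: "(\<Sum>i. sol_term lam \<beta> n t i) = (-lam) * (-1)^n * RLn + (-lam) * (-1)^m * RLm"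
      using sums_unique2 by fastforce
    have "sol lam \<beta> n t = (-1)^n * ((-lam) * (-1)^n * RLn + (-lam) * (-1)^m * RLm)"
      by (simp add: sol_def E)
    also have "\<dots> = - lam * (RLn - RLm)"
      by (simp add: Suc algebra_simps)
    finally show ?thesis using sol_n_0[of n \<beta> lam] bp by (simp add: Suc RLn_def RLm_def)
  qed
qed


lemma sol_bounded:
  fixes lam T :: real
  assumes lam: "lam > 0" and b: "\<And>j. 0 < \<beta> j \<and> \<beta> j \<le> 1" and T: "T \<ge> 0"
  shows "\<exists>B. \<forall>s. 0 \<le> s \<longrightarrow> s \<le> T \<longrightarrow> \<bar>sol lam \<beta> n s\<bar> \<le> B"
proof -
  obtain M where M1: "summable M" and M2: "\<And>i s. 0 \<le> s \<Longrightarrow> s \<le> T \<Longrightarrow> \<bar>sol_term lam \<beta> n s i\<bar> \<le> M i"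
    using sol_bound[where \<beta>=\<beta> and n = n, OF lam b T] by auto
  show ?thesis
  proof (intro exI allI impI)
    fix s assume s: "0 \<le> s" "s \<le> T"
    have "norm (suminf (sol_term lam \<beta> n s)) \<le> suminf M"
      by (rule norm_suminf_le[OF _ M1]) (use M2[OF s] in auto)
    thus "\<bar>sol lam \<beta> n s\<bar> \<le> suminf M" by (simp add: sol_def abs_mult)
  qed
qed

lemma uniq_step:
  fixes lam :: real and p :: "nat \<Rightarrow> real \<Rightarrow> real"
  assumes lam: "lam > 0" and b: "\<And>j. 0 < \<beta> j \<and> \<beta> j \<le> 1"
    and ps: "solves_sys lam \<beta> p" and pc: "continuous_on {0..} (p n)"
    and IH: "n > 0 \<Longrightarrow> \<forall>t\<ge>0. p (n-1) t = sol lam \<beta> (n-1) t"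
    and T: "T \<ge> 0"
  shows "p n T = sol lam \<beta> n T"
proof -
  have bp: "\<And>j. 0 < \<beta> j" using b by simp
  define q where "q = (\<lambda>s. p n s - sol lam \<beta> n s)"
  have "compact (p n ` {0..T})"
    by (rule compact_continuous_image[OF continuous_on_subset[OF pc]]) auto
  hence "bounded (p n ` {0..T})" by (rule compact_imp_bounded)
  then obtain Bp where Bp0: "\<forall>x\<in>p n ` {0..T}. norm x \<le> Bp" unfolding bounded_iff by blast
  have Bp: "\<bar>p n s\<bar> \<le> Bp" if "s \<in> {0..T}" for s using Bp0 that by auto
  obtain Bs where Bs: "\<And>s. 0 \<le> s \<Longrightarrow> s \<le> T \<Longrightarrow> \<bar>sol lam \<beta> n s\<bar> \<le> Bs"
    using sol_bounded[where \<beta>=\<beta> and n = n, OF lam b T] by auto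
  have ps1: "p 0 0 = 1" and ps2: "\<And>n. n \<ge> 1 \<Longrightarrow> p n 0 = 0"
    and ps3: "\<And>n t. t \<ge> 0 \<Longrightarrow> RL_integrable (\<beta> n) (p n) t \<and>
        p n t = p n 0 - lam * (RL_int (\<beta> n) (p n) t
                 - (if n = 0 then 0 else RL_int (\<beta> (n - 1)) (p (n - 1)) t))"
    using ps unfolding solves_sys_def by blast+
  have p00: "p n 0 = sol lam \<beta> n 0"
  proof (cases "n = 0")
    case True thus ?thesis using ps1 sol_0_0[of \<beta> lam] bp by simp
  next
    case False thus ?thesis using ps2[of n] sol_n_0[of n \<beta> lam] bp by simp
  qed
  have ints: "(\<lambda>s. (t-s) powr (\<beta> n - 1) * p n s) integrable_on {0..t}"
     "(\<lambda>s. (t-s) powr (\<beta> n - 1) * sol lam \<beta> n s) integrable_on {0..t}" if "0 \<le> t" for t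
    using conjunct1[OF ps3[OF that, of n]] rl_sol(1)[where \<beta>=\<beta> and n = n, OF lam b that]
    by (auto simp: RL_integrable_def)
  have qi: "RL_integrable (\<beta> n) q t" and qint: "RL_int (\<beta> n) q t = RL_int (\<beta> n) (p n) t - RL_int (\<beta> n) (sol lam \<beta> n) t"
    if "0 \<le> t" for t
  proof -
    have H: "((\<lambda>s. (t-s) powr (\<beta> n - 1) * p n s - (t-s) powr (\<beta> n - 1) * sol lam \<beta> n s) has_integral
          (integral {0..t} (\<lambda>s. (t-s) powr (\<beta> n - 1) * p n s) - integral {0..t} (\<lambda>s. (t-s) powr (\<beta> n - 1) * sol lam \<beta> n s))) {0..t}"
      by (intro has_integral_diff integrable_integral ints[OF that])
    hence H': "((\<lambda>s. (t-s) powr (\<beta> n - 1) * q s) has_integral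
          (integral {0..t} (\<lambda>s. (t-s) powr (\<beta> n - 1) * p n s) - integral {0..t} (\<lambda>s. (t-s) powr (\<beta> n - 1) * sol lam \<beta> n s))) {0..t}"
      by (simp add: q_def right_diff_distrib)
    thus "RL_integrable (\<beta> n) q t" unfolding RL_integrable_def by blast
    show "RL_int (\<beta> n) q t = RL_int (\<beta> n) (p n) t - RL_int (\<beta> n) (sol lam \<beta> n) t"
      unfolding RL_int_def using integral_unique[OF H'] by (simp add: right_diff_distrib)
  qed
  have qe: "q t = - lam * RL_int (\<beta> n) q t" if t: "0 \<le> t" for t
  proof -
    have Ep: "p n t = p n 0 - lam * (RL_int (\<beta> n) (p n) t
                 - (if n = 0 then 0 else RL_int (\<beta> (n - 1)) (p (n - 1)) t))"
      using conjunct2[OF ps3[OF t, of n]] .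
    have Es: "sol lam \<beta> n t = sol lam \<beta> n 0 - lam * (RL_int (\<beta> n) (sol lam \<beta> n) t
                 - (if n = 0 then 0 else RL_int (\<beta> (n - 1)) (sol lam \<beta> (n - 1)) t))"
      by (rule sol_eq[where \<beta>=\<beta>, OF lam b t])
    have X: "(if n = 0 then 0 else RL_int (\<beta> (n - 1)) (p (n - 1)) t)
           = (if n = 0 then 0 else RL_int (\<beta> (n - 1)) (sol lam \<beta> (n - 1)) t)"
    proof (cases "n = 0")
      case False
      hence "\<forall>s\<ge>0. p (n-1) s = sol lam \<beta> (n-1) s" using IH by simp
      hence "integral {0..t} (\<lambda>s. (t-s) powr (\<beta> (n-1) - 1) * p (n-1) s)
           = integral {0..t} (\<lambda>s. (t-s) powr (\<beta> (n-1) - 1) * sol lam \<beta> (n-1) s)"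
        by (intro integral_cong) auto
      thus ?thesis by (simp add: RL_int_def)
    qed simp
    define Xp where "Xp = (if n = 0 then 0 else RL_int (\<beta> (n - 1)) (p (n - 1)) t)"
    define Xs where "Xs = (if n = 0 then 0 else RL_int (\<beta> (n - 1)) (sol lam \<beta> (n - 1)) t)"
    define RLp where "RLp = RL_int (\<beta> n) (p n) t"
    define RLs where "RLs = RL_int (\<beta> n) (sol lam \<beta> n) t"
    have Ep': "p n t = p n 0 - lam * (RLp - Xp)" using Ep unfolding Xp_def RLp_def .
    have Es': "sol lam \<beta> n t = sol lam \<beta> n 0 - lam * (RLs - Xs)" using Es unfolding Xs_def RLs_def .
    have X': "Xp = Xs" using X unfolding Xp_def Xs_def .
    have "q t = (p n 0 - lam * (RLp - Xp)) - (sol lam \<beta> n 0 - lam * (RLs - Xs))"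
      unfolding q_def using Ep' Es' by simp
    also have "\<dots> = - lam * (RLp - RLs)" using X' p00 by (simp add: algebra_simps)
    also have "RLp - RLs = RL_int (\<beta> n) q t" using qint[OF t] unfolding RLp_def RLs_def by simp
    finally show ?thesis .
  qed
  have "q T = 0"
  proof (rule volterra_zero[where M = "Bp + Bs" and q = q and b = "\<beta> n" and lam = lam and T = T])
    show "0 < \<beta> n" by (rule bp)
    show "0 \<le> T" by (rule T)
    fix t assume t: "0 \<le> t" "t \<le> T"
    show "\<bar>q t\<bar> \<le> Bp + Bs" using Bp[of t] Bs[OF t] t by (simp add: q_def)
    show "RL_integrable (\<beta> n) q t" by (rule qi) (use t in simp)
    show "q t = - lam * RL_int (\<beta> n) q t" by (rule qe) (use t in simp)
  qed
  thus ?thesis by (simp add: q_def)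
qed

theorem theorem4p1:
  fixes lam :: real and \<beta> :: "nat \<Rightarrow> real"
  assumes "lam > 0" and "\<And>n. 0 < \<beta> n \<and> \<beta> n \<le> 1"
  shows "(\<forall>n t. t \<ge> 0 \<longrightarrow> summable (sol_term lam \<beta> n t))
     \<and> solves_sys lam \<beta> (sol lam \<beta>)
     \<and> (\<forall>p. solves_sys lam \<beta> p \<and> (\<forall>n. continuous_on {0..} (p n))
            \<longrightarrow> (\<forall>n t. t \<ge> 0 \<longrightarrow> p n t = sol lam \<beta> n t))"
proof (intro conjI allI impI)
  note lam = assms(1) and b = assms(2)
  have bp: "\<And>j. 0 < \<beta> j" using b by simp
  fix n :: nat and t :: real assume t: "t \<ge> 0"
  obtain M where M1: "summable M" and M2: "\<And>i s. 0 \<le> s \<Longrightarrow> s \<le> t \<Longrightarrow> \<bar>sol_term lam \<beta> n s i\<bar> \<le> M i"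
    using sol_bound[where \<beta>=\<beta> and n = n, OF lam b t] by auto
  show "summable (sol_term lam \<beta> n t)"
    by (rule summable_comparison_test[OF _ M1]) (use M2[OF t] in auto)
next
  note lam = assms(1) and b = assms(2)
  have bp: "\<And>j. 0 < \<beta> j" using b by simp
  show "solves_sys lam \<beta> (sol lam \<beta>)"
    unfolding solves_sys_def
  proof (intro conjI allI impI)
    show "sol lam \<beta> 0 0 = 1" using sol_0_0[of \<beta> lam] bp by simp
    fix n :: nat assume "1 \<le> n" thus "sol lam \<beta> n 0 = 0" using sol_n_0[of n \<beta> lam] bp by simp
  next
    fix n :: nat and t :: real assume t: "0 \<le> t"
    show "RL_integrable (\<beta> n) (sol lam \<beta> n) t" by (rule rl_sol(1)[where \<beta>=\<beta>, OF lam b t])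
    show "sol lam \<beta> n t = sol lam \<beta> n 0 - lam * (RL_int (\<beta> n) (sol lam \<beta> n) t
                 - (if n = 0 then 0 else RL_int (\<beta> (n - 1)) (sol lam \<beta> (n - 1)) t))"
      by (rule sol_eq[where \<beta>=\<beta>, OF lam b t])
  qed
next
  note lam = assms(1) and b = assms(2)
  fix p :: "nat \<Rightarrow> real \<Rightarrow> real"
  assume P: "solves_sys lam \<beta> p \<and> (\<forall>n. continuous_on {0..} (p n))"
  have "\<forall>t\<ge>0. p n t = sol lam \<beta> n t" for n
  proof (induction n)
    case 0
    show ?case
    proof (intro allI impI)
      fix t :: real assume t: "0 \<le> t"
      have pc: "continuous_on {0..} (p 0)" using P by blast
      show "p 0 t = sol lam \<beta> 0 t"
        by (rule uniq_step[where \<beta>=\<beta> and n = 0, OF lam b conjunct1[OF P] pc _ t]) simp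
    qed
  next
    case (Suc m)
    show ?case
    proof (intro allI impI)
      fix t :: real assume t: "0 \<le> t"
      have pc: "continuous_on {0..} (p (Suc m))" using P by blast
      show "p (Suc m) t = sol lam \<beta> (Suc m) t"
        by (rule uniq_step[where \<beta>=\<beta> and n = "Suc m", OF lam b conjunct1[OF P] pc _ t]) (use Suc.IH in simp)
    qed
  qed
  fix n :: nat and t :: real assume "t \<ge> 0"
  thus "p n t = sol lam \<beta> n t" using \<open>\<And>n. \<forall>t\<ge>0. p n t = sol lam \<beta> n t\<close> by blast
qed

end
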